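(* Let $\Gamma\subseteq\mathbb R^n$ be an open convex set, $S\subseteq\Gamma$ a nonempty convex set, and $f:\Gamma\to\mathbb R$ a continuously differentiable function that is quasiconvex on $\Gamma$. Let $\bar S=\arg\min\{f(x)\mid x\in S\}$ be nonempty. Then exactly one of the following alternatives holds: (I) $\nabla f(x)\ne 0$ for all $x\in\bar S$, and the normalized gradient $\nabla f(x)/\|\nabla f(x)\|$ is constant over $\bar S$; (II) $\nabla f(x)=0$ for all $x\in\bar S$.
   Context: A function $f:\Gamma\to\mathbb R$ on a convex set $\Gamma\subseteq\mathbb R^n$ is quasiconvex on $\Gamma$ iff $f(x+t(y-x))\le\max\{f(x),f(y)\}$ for all $x,y\in\Gamma$ and $t\in[0,1]$. *)

theory Defs
  imports "HOL-Analysis.Analysis"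
begin

definition quasiconvex_on :: "'a::real_vector set \<Rightarrow> ('a \<Rightarrow> real) \<Rightarrow> bool" where
  "quasiconvex_on \<Gamma> f \<longleftrightarrow>
     (\<forall>x\<in>\<Gamma>. \<forall>y\<in>\<Gamma>. \<forall>t::real. 0 \<le> t \<and> t \<le> 1 \<longrightarrow> f (x + t *\<^sub>R (y - x)) \<le> max (f x) (f y))"

definition argmin_on :: "('a \<Rightarrow> real) \<Rightarrow> 'a set \<Rightarrow> 'a set" where
  "argmin_on f S = {x \<in> S. \<forall>y\<in>S. f x \<le> f y}"

end

theory Submission
  imports Defs
begin

lemma dirderiv:
  fixes f :: "'a::euclidean_space \<Rightarrow> real"
  assumes "(f has_derivative (\<lambda>h. D \<bullet> h)) (at x)"
  shows "((\<lambda>s. (f (x + s *\<^sub>R v) - f x) / s) \<longlongrightarrow> D \<bullet> v) (at_right (0::real))"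
proof -
  have "((\<lambda>s. x + s *\<^sub>R v) has_derivative (\<lambda>s. s *\<^sub>R v)) (at 0)"
    by (auto intro!: derivative_eq_intros)
  moreover have "(f has_derivative (\<lambda>h. D \<bullet> h)) (at (x + 0 *\<^sub>R v))" using assms by simp
  ultimately have "((\<lambda>s. f (x + s *\<^sub>R v)) has_derivative (\<lambda>s. D \<bullet> (s *\<^sub>R v))) (at 0)"
    by (rule has_derivative_compose)
  then have "((\<lambda>s. f (x + s *\<^sub>R v)) has_field_derivative (D \<bullet> v)) (at 0)"
    unfolding has_field_derivative_def
    by (rule has_derivative_eq_rhs) (auto simp: fun_eq_iff)
  then have "((\<lambda>s. (f (x + s *\<^sub>R v) - f x) / s) \<longlongrightarrow> D \<bullet> v) (at 0)"
    unfolding DERIV_def by simp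
  then show ?thesis by (rule tendsto_mono[OF at_le[OF subset_UNIV]])
qed

lemma divmax:
  fixes A B c s :: real
  assumes "A \<le> max B c" "s > 0"
  shows "(A - c) / s \<le> max ((B - c) / s) 0"
proof (cases "B \<le> c")
  case True
  then have "A - c \<le> 0" using assms by auto
  then have "(A - c) / s \<le> 0" using assms by (simp add: divide_nonpos_pos)
  then show ?thesis by (rule order_trans[OF _ max.cobounded2])
next
  case False
  then have "A - c \<le> B - c" using assms by auto
  then have "(A - c) / s \<le> (B - c) / s" using assms by (simp add: divide_right_mono)
  then show ?thesis by simp
qed

lemma key:
  fixes \<Gamma> S :: "'a::euclidean_space set" and f :: "'a \<Rightarrow> real" and f' :: "'a \<Rightarrow> 'a"
  assumes op: "open \<Gamma>"
    and sub: "S \<subseteq> \<Gamma>" and cvx: "convex S"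
    and der: "\<And>x. x \<in> \<Gamma> \<Longrightarrow> (f has_derivative (\<lambda>h. f' x \<bullet> h)) (at x)"
    and cont: "continuous_on \<Gamma> f'"
    and qc: "quasiconvex_on \<Gamma> f"
    and xb: "xb \<in> argmin_on f S" and yb: "yb \<in> argmin_on f S"
    and hw: "f' xb \<bullet> w \<le> 0"
  shows "f' yb \<bullet> w \<le> 0"
proof -
  have xS: "xb \<in> S" and yS: "yb \<in> S" and xmin: "\<forall>y\<in>S. f xb \<le> f y" and ymin: "\<forall>y\<in>S. f yb \<le> f y"
    using xb yb by (auto simp: argmin_on_def)
  have fxy: "f xb = f yb" using xS yS xmin ymin by (meson order_antisym)
  have xG: "xb \<in> \<Gamma>" and yG: "yb \<in> \<Gamma>" using xS yS sub by auto
  obtain e where e: "e > 0" "ball xb e \<subseteq> \<Gamma>" using op xG open_contains_ball by blast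
  have evG: "eventually (\<lambda>s. xb + s *\<^sub>R w \<in> \<Gamma>) (at_right (0::real))"
  proof (rule eventually_at_rightI[of 0 "e / (norm w + 1)"])
    fix s :: real assume s: "s \<in> {0<..<e / (norm w + 1)}"
    have "s * norm w \<le> s * (norm w + 1)" using s by auto
    also have "\<dots> < e" proof -
      have "norm w + 1 > 0" by (simp add: add_nonneg_pos)
      then show ?thesis using s by (simp add: less_divide_eq)
    qed
    finally have "dist xb (xb + s *\<^sub>R w) < e" using s by (simp add: dist_norm)
    then show "xb + s *\<^sub>R w \<in> \<Gamma>" using e by auto
  qed (use e in \<open>simp add: add_nonneg_pos\<close>)
  have step: "f' (xb + l *\<^sub>R (yb - xb)) \<bullet> w \<le> 0" if l: "0 \<le> l" "l < 1" for l :: real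
  proof -
    define z where "z = xb + l *\<^sub>R (yb - xb)"
    have z_eq: "z = (1 - l) *\<^sub>R xb + l *\<^sub>R yb" unfolding z_def by (simp add: algebra_simps)
    have zS: "z \<in> S" unfolding z_eq using convexD[OF cvx xS yS, of "1 - l" l] l by auto
    have "f z \<le> max (f xb) (f yb)" using qc xG yG l unfolding quasiconvex_on_def z_def by auto
    then have fz: "f z = f xb" using xmin zS fxy by (simp add: order_antisym)
    have zG: "z \<in> \<Gamma>" using zS sub by auto
    define v where "v = (1 - l) *\<^sub>R w"
    have ev: "eventually (\<lambda>s. (f (z + s *\<^sub>R v) - f z) / s \<le> max ((f (xb + s *\<^sub>R w) - f xb) / s) 0) (at_right (0::real))"
      using evG eventually_at_right_less[of 0]
    proof eventually_elim
      case (elim s)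
      define p where "p = xb + s *\<^sub>R w"
      have "f (p + l *\<^sub>R (yb - p)) \<le> max (f p) (f yb)"
        using qc elim l yG unfolding quasiconvex_on_def p_def by auto
      moreover have "p + l *\<^sub>R (yb - p) = z + s *\<^sub>R v"
        unfolding p_def z_def v_def by (simp add: algebra_simps)
      ultimately have "f (z + s *\<^sub>R v) \<le> max (f p) (f xb)" using fxy by simp
      from divmax[OF this] elim show ?case unfolding p_def fz by simp
    qed
    have L: "((\<lambda>s. (f (z + s *\<^sub>R v) - f z) / s) \<longlongrightarrow> f' z \<bullet> v) (at_right (0::real))"
      by (rule dirderiv[OF der[OF zG]])
    have R: "((\<lambda>s. max ((f (xb + s *\<^sub>R w) - f xb) / s) 0) \<longlongrightarrow> max (f' xb \<bullet> w) 0) (at_right (0::real))"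
      by (intro tendsto_max dirderiv[OF der[OF xG]] tendsto_const)
    have "f' z \<bullet> v \<le> max (f' xb \<bullet> w) 0"
      by (rule tendsto_le[OF trivial_limit_at_right_real R L ev])
    then have "(1 - l) * (f' z \<bullet> w) \<le> 0" using hw by (simp add: v_def)
    then have "f' z \<bullet> w \<le> 0" using l by (simp add: mult_le_0_iff)
    then show ?thesis by (simp add: z_def)
  qed
  have ic: "isCont f' yb" using cont op yG by (simp add: continuous_on_eq_continuous_at)
  have "((\<lambda>l. xb + l *\<^sub>R (yb - xb)) \<longlongrightarrow> xb + 1 *\<^sub>R (yb - xb)) (at_left (1::real))"
    by (intro tendsto_intros)
  then have "((\<lambda>l. xb + l *\<^sub>R (yb - xb)) \<longlongrightarrow> yb) (at_left (1::real))" by simp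
  from isCont_tendsto_compose[OF ic this]
  have "((\<lambda>l. f' (xb + l *\<^sub>R (yb - xb)) \<bullet> w) \<longlongrightarrow> f' yb \<bullet> w) (at_left (1::real))"
    by (intro tendsto_inner tendsto_const)
  moreover have "eventually (\<lambda>l. f' (xb + l *\<^sub>R (yb - xb)) \<bullet> w \<le> 0) (at_left (1::real))"
    by (rule eventually_at_leftI[of 0]) (auto intro: step)
  ultimately show ?thesis
    by (rule tendsto_upperbound) (simp add: trivial_limit_at_left_real)
qed

lemma dir_eq:
  fixes g h :: "'a::euclidean_space"
  assumes "g \<noteq> 0" "h \<noteq> 0" and imp: "\<And>w. h \<bullet> w \<le> 0 \<Longrightarrow> g \<bullet> w \<le> 0"
  shows "g /\<^sub>R norm g = h /\<^sub>R norm h"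
proof -
  have gh0: "g \<bullet> h \<ge> 0" using imp[of "- h"] by simp
  have "g \<bullet> ((h \<bullet> h) *\<^sub>R g - (g \<bullet> h) *\<^sub>R h) \<le> 0"
    by (rule imp) (simp add: inner_diff_right inner_commute[of h g])
  then have "(h \<bullet> h) * (g \<bullet> g) \<le> (g \<bullet> h)^2"
    by (simp add: inner_diff_right power2_eq_square mult.commute)
  then have "(norm g * norm h)^2 \<le> (g \<bullet> h)^2"
    by (simp add: power_mult_distrib power2_norm_eq_inner mult.commute)
  then have "norm g * norm h \<le> g \<bullet> h" using gh0
    by (simp add: power2_le_iff_abs_le)
  then have eq: "g \<bullet> h = norm g * norm h" using Cauchy_Schwarz_ineq2[of g h] by auto
  have ng: "norm g > 0" "norm h > 0" using assms by auto
  define a where "a = g /\<^sub>R norm g"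
  define b where "b = h /\<^sub>R norm h"
  have aa: "a \<bullet> a = 1" using ng unfolding a_def by (simp add: power2_norm_eq_inner[symmetric] power2_eq_square)
  have bb: "b \<bullet> b = 1" using ng unfolding b_def by (simp add: power2_norm_eq_inner[symmetric] power2_eq_square)
  have ab: "a \<bullet> b = 1" using ng unfolding a_def b_def by (simp add: eq field_simps)
  have "(a - b) \<bullet> (a - b) = a \<bullet> a - 2 * (a \<bullet> b) + b \<bullet> b"
    by (simp add: inner_diff_left inner_diff_right inner_commute[of b a])
  then have "(a - b) \<bullet> (a - b) = 0" using aa bb ab by simp
  then show ?thesis unfolding a_def b_def by simp
qed

theorem lemma6:
  fixes \<Gamma> S :: "'a::euclidean_space set" and f :: "'a \<Rightarrow> real" and f' :: "'a \<Rightarrow> 'a"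
  assumes "open \<Gamma>" and "convex \<Gamma>"
    and "S \<subseteq> \<Gamma>" and "S \<noteq> {}" and "convex S"
    and "\<And>x. x \<in> \<Gamma> \<Longrightarrow> (f has_derivative (\<lambda>h. f' x \<bullet> h)) (at x)"
    and "continuous_on \<Gamma> f'"
    and "quasiconvex_on \<Gamma> f"
    and "argmin_on f S \<noteq> {}"
  shows "((\<forall>x\<in>argmin_on f S. f' x \<noteq> 0) \<and>
           (\<exists>u. \<forall>x\<in>argmin_on f S. f' x /\<^sub>R norm (f' x) = u))
         \<noteq> (\<forall>x\<in>argmin_on f S. f' x = 0)"
proof -
  have K: "\<And>xb yb w. xb \<in> argmin_on f S \<Longrightarrow> yb \<in> argmin_on f S \<Longrightarrow> f' xb \<bullet> w \<le> 0 \<Longrightarrow> f' yb \<bullet> w \<le> 0"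
    using key[OF assms(1,3,5,6,7,8)] by blast
  show ?thesis
  proof (cases "\<forall>x\<in>argmin_on f S. f' x = 0")
    case True
    then show ?thesis using assms(9) by auto
  next
    case False
    then obtain b where b: "b \<in> argmin_on f S" "f' b \<noteq> 0" by auto
    have nz: "f' x \<noteq> 0" if x: "x \<in> argmin_on f S" for x
    proof
      assume "f' x = 0"
      then have "f' b \<bullet> f' b \<le> 0" using K[OF x b(1), of "f' b"] by simp
      then show False using b(2) by (metis inner_gt_zero_iff not_le)
    qed
    have "\<forall>x\<in>argmin_on f S. f' x /\<^sub>R norm (f' x) = f' b /\<^sub>R norm (f' b)"
    proof
      fix x assume x: "x \<in> argmin_on f S"
      show "f' x /\<^sub>R norm (f' x) = f' b /\<^sub>R norm (f' b)"
        by (rule dir_eq[OF nz[OF x] b(2)]) (rule K[OF b(1) x])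
    qed
    then show ?thesis using False nz by blast
  qed
qed

end
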